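(* For every integer $k>1$, $\gamma(k) \le (2k+2)\,(\gamma(k-1)+1) - 1$.
   Context: For words $C,S$, $C$ is an \emph{s-cover} of $S$ if for every position $i$ of $S$ there exist indices $j_0<\dots<j_{|C|-1}$ with $S[j_t]=C[t]$ for all $t$ and $i\in\{j_0,\dots,j_{|C|-1}\}$. An s-cover $C$ of $S$ is \emph{non-trivial} if $|C|<|S|$; a word is \emph{s-primitive} if it has no non-trivial s-cover. $\gamma(k)$ is the maximum length of an s-primitive word over an alphabet of size $k$. *)

theory Defs
  imports Main "HOL-Library.Extended_Nat"
begin

definition scover :: "'a list \<Rightarrow> 'a list \<Rightarrow> bool" where
  "scover C S \<longleftrightarrow>
     (\<forall>i < length S. \<exists>js :: nat list.
        length js = length C \<and> sorted_wrt (<) js \<and>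
        (\<forall>t < length C. js ! t < length S \<and> S ! (js ! t) = C ! t) \<and>
        i \<in> set js)"

definition s_primitive :: "'a list \<Rightarrow> bool" where
  "s_primitive S \<longleftrightarrow> \<not> (\<exists>C. scover C S \<and> length C < length S)"

definition gamma :: "nat \<Rightarrow> enat" where
  "gamma k = (SUP S \<in> {S :: nat list. set S \<subseteq> {..<k} \<and> s_primitive S}. enat (length S))"

end

theory Submission
  imports Defs "HOL-Library.Sublist"
begin


definition emb :: "'a list \<Rightarrow> 'a list \<Rightarrow> nat list \<Rightarrow> bool" where
  "emb C S js \<longleftrightarrow> length js = length C \<and> sorted_wrt (<) js \<and>
     (\<forall>t<length C. js!t < length S \<and> S!(js!t) = C!t)"

lemma subseq_emb:
  assumes "subseq C S" shows "\<exists>js. emb C S js"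
  using assms
proof (induction rule: list_emb.induct)
  case (list_emb_Nil ys)
  then show ?case by (rule exI[of _ "[]"]) (simp add: emb_def)
next
  case (list_emb_Cons xs ys y)
  then obtain js where "emb xs ys js" by blast
  then have "emb xs (y#ys) (map Suc js)"
    by (auto simp: emb_def sorted_wrt_map)
  then show ?case by blast
next
  case (list_emb_Cons2 x y xs ys)
  then obtain js where js: "emb xs ys js" by blast
  have "emb (x#xs) (y#ys) (0 # map Suc js)"
    using js list_emb_Cons2.hyps(1) unfolding emb_def
    by (auto simp: sorted_wrt_map less_Suc_eq_0_disj)
  then show ?case by blast
qed



lemma emb_shift:
  assumes "emb C (y#ys) js" "\<forall>x\<in>set js. x > 0"
  shows "emb C ys (map (\<lambda>x. x - 1) js)"
proof -
  have pos: "\<And>t. t < length js \<Longrightarrow> js!t > 0" using assms(2) by auto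
  have L: "length js = length C" and S: "sorted_wrt (<) js"
    and N: "\<And>t. t < length C \<Longrightarrow> js!t < Suc (length ys) \<and> (y#ys)!(js!t) = C!t"
    using assms(1) unfolding emb_def by auto
  have "sorted_wrt (<) (map (\<lambda>x. x - 1) js)"
    unfolding sorted_wrt_iff_nth_less
  proof (intro allI impI)
    fix i j assume "i < j" "j < length (map (\<lambda>x. x - 1) js)"
    then have "js!i < js!j" "js!i > 0" using S pos unfolding sorted_wrt_iff_nth_less by auto
    then show "map (\<lambda>x. x - 1) js ! i < map (\<lambda>x. x - 1) js ! j"
      using \<open>i<j\<close> \<open>j < _\<close> by auto
  qed
  moreover have "\<forall>t<length C. (map (\<lambda>x. x - 1) js)!t < length ys \<and> ys!((map (\<lambda>x. x - 1) js)!t) = C!t"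
  proof (intro allI impI)
    fix t assume t: "t < length C"
    have p: "js!t > 0" using pos t L by auto
    have "js!t = Suc (js!t - 1)" using p by auto
    then show "(map (\<lambda>x. x - 1) js)!t < length ys \<and> ys!((map (\<lambda>x. x - 1) js)!t) = C!t"
      using N[OF t] t L by (metis Suc_less_eq nth_Cons_Suc nth_map)
  qed
  ultimately show ?thesis using L unfolding emb_def by simp
qed



lemma emb_subseq:
  assumes "emb C S js" shows "subseq C S"
  using assms
proof (induction S arbitrary: C js)
  case Nil
  have "C = []"
  proof (rule ccontr)
    assume "C \<noteq> []"
    then have "js!0 < length ([]::'a list)" using Nil unfolding emb_def by blast
    then show False by simp
  qed
  then show ?case by simp
next
  case (Cons y ys)
  have L: "length js = length C" and S0: "sorted_wrt (<) js" and
    N: "\<And>t. t < length C \<Longrightarrow> js!t < length (y#ys) \<and> (y#ys)!(js!t) = C!t"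
    using Cons.prems unfolding emb_def by auto
  show ?case
  proof (cases js)
    case Nil
    then have "C = []" using L by simp
    then show ?thesis by simp
  next
    case (Cons j js')
    note js = this
    have S: "sorted_wrt (<) (j#js')" using S0 js by simp
    show ?thesis
    proof (cases "j = 0")
      case True
      from L js obtain c C' where C: "C = c # C'"
        by (cases C) auto
      have cy: "c = y" using N[of 0] js C True by simp
      have e': "emb C' (y#ys) js'"
        unfolding emb_def
      proof (intro conjI allI impI)
        show "length js' = length C'" using L js C by simp
        show "sorted_wrt (<) js'" using S by simp
        fix t assume "t < length C'"
        then show "js'!t < length (y#ys)" "(y#ys)!(js'!t) = C'!t"
          using N[of "Suc t"] js C by simp_all
      qed
      have "\<forall>x\<in>set js'. x > 0"
        using S True by simp
      then have "emb C' ys (map (\<lambda>x. x - 1) js')" by (rule emb_shift[OF e'])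
      then have "subseq C' ys" by (rule Cons.IH)
      then show ?thesis using C cy by simp
    next
      case False
      have "\<forall>x\<in>set js. x > 0"
        using S js False by auto
      then have "emb C ys (map (\<lambda>x. x - 1) js)" by (rule emb_shift[OF Cons.prems])
      then have "subseq C ys" by (rule Cons.IH)
      then show ?thesis by (rule list_emb_Cons)
    qed
  qed
qed

lemma scover_emb: "scover C S \<longleftrightarrow> (\<forall>i<length S. \<exists>js. emb C S js \<and> i \<in> set js)"
  unfolding scover_def emb_def by (simp add: conj_assoc)



lemma cov_to_split:
  assumes e: "emb C S js" and i: "i \<in> set js"
  shows "\<exists>C1 C2. C = C1 @ S!i # C2 \<and> subseq C1 (take i S) \<and> subseq C2 (drop (Suc i) S)"
proof -
  have L: "length js = length C" and S0: "sorted_wrt (<) js" and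
    N: "\<And>t. t < length C \<Longrightarrow> js!t < length S \<and> S!(js!t) = C!t"
    using e unfolding emb_def by auto
  have SN: "\<And>a b. a < b \<Longrightarrow> b < length js \<Longrightarrow> js!a < js!b"
    using S0 unfolding sorted_wrt_iff_nth_less by blast
  obtain t0 where t0: "t0 < length js" "js!t0 = i" using i by (metis in_set_conv_nth)
  have t0C: "t0 < length C" using t0 L by simp
  have iS: "i < length S" using N[OF t0C] t0 by simp
  have Ci: "C!t0 = S!i" using N[OF t0C] t0 by simp
  have decomp: "C = take t0 C @ S!i # drop (Suc t0) C"
    using id_take_nth_drop[OF t0C] Ci by simp
  have e1: "emb (take t0 C) (take i S) (take t0 js)"
    unfolding emb_def
  proof (intro conjI allI impI)
    show "length (take t0 js) = length (take t0 C)" using L by simp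
    show "sorted_wrt (<) (take t0 js)" using S0 by (rule sorted_wrt_take)
    fix t assume t: "t < length (take t0 C)"
    then have tt: "t < t0" "t < length C" by auto
    have lt: "js!t < i" using SN[OF tt(1) t0(1)] t0(2) by simp
    show "take t0 js ! t < length (take i S)" using lt iS tt by simp
    show "take i S ! (take t0 js ! t) = take t0 C ! t" using lt tt N[OF tt(2)] by simp
  qed
  define js2 where "js2 = map (\<lambda>j. j - Suc i) (drop (Suc t0) js)"
  have e2: "emb (drop (Suc t0) C) (drop (Suc i) S) js2"
    unfolding emb_def
  proof (intro conjI allI impI)
    show "length js2 = length (drop (Suc t0) C)" using L by (simp add: js2_def)
    show "sorted_wrt (<) js2"
      unfolding sorted_wrt_iff_nth_less
    proof (intro allI impI)
      fix a b assume ab: "a < b" "b < length js2"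
      then have b2: "Suc t0 + b < length js" by (simp add: js2_def)
      have "js!(Suc t0 + a) < js!(Suc t0 + b)" using SN ab b2 by simp
      moreover have "js!t0 < js!(Suc t0 + a)" using SN ab b2 by simp
      ultimately show "js2!a < js2!b" using ab b2 t0 by (simp add: js2_def)
    qed
    fix t assume t: "t < length (drop (Suc t0) C)"
    then have tt: "Suc t0 + t < length C" by simp
    have gt: "js!(Suc t0 + t) > i" using SN[of t0 "Suc t0 + t"] tt L t0 by simp
    have dd: "drop (Suc t0) js ! t = js ! (Suc t0 + t)" by (rule nth_drop) (use tt L in simp)
    have js2t: "js2!t = js!(Suc t0 + t) - Suc i" using tt L dd by (simp add: js2_def)
    show "js2!t < length (drop (Suc i) S)" using js2t gt conjunct1[OF N[OF tt]] by (simp only: length_drop)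
    have "drop (Suc i) S ! (js2!t) = S!(Suc i + (js!(Suc t0 + t) - Suc i))"
      using js2t iS by simp
    also have "\<dots> = S!(js!(Suc t0 + t))" using gt by simp
    also have "\<dots> = C!(Suc t0 + t)" using N[OF tt] by simp
    also have "\<dots> = drop (Suc t0) C ! t" using tt by simp
    finally show "drop (Suc i) S ! (js2!t) = drop (Suc t0) C ! t" .
  qed
  show ?thesis using decomp emb_subseq[OF e1] emb_subseq[OF e2] by blast
qed



lemma split_to_cov:
  assumes iS: "i < length S" and C: "C = C1 @ S!i # C2"
    and s1: "subseq C1 (take i S)" and s2: "subseq C2 (drop (Suc i) S)"
  shows "\<exists>js. emb C S js \<and> i \<in> set js"
proof -
  obtain js1 where e1: "emb C1 (take i S) js1" using subseq_emb[OF s1] by blast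
  obtain js2 where e2: "emb C2 (drop (Suc i) S) js2" using subseq_emb[OF s2] by blast
  have L1: "length js1 = length C1" and S1: "sorted_wrt (<) js1" and
    N1: "\<And>t. t < length C1 \<Longrightarrow> js1!t < length (take i S) \<and> take i S!(js1!t) = C1!t"
    using e1 unfolding emb_def by auto
  have L2: "length js2 = length C2" and S2: "sorted_wrt (<) js2" and
    N2: "\<And>t. t < length C2 \<Longrightarrow> js2!t < length (drop (Suc i) S) \<and> drop (Suc i) S!(js2!t) = C2!t"
    using e2 unfolding emb_def by auto
  define js where "js = js1 @ i # map (\<lambda>j. Suc i + j) js2"
  have lt1: "\<And>x. x \<in> set js1 \<Longrightarrow> x < i"
  proof -
    fix x assume "x \<in> set js1"
    then obtain t where "t < length js1" "x = js1!t" by (metis in_set_conv_nth)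
    then show "x < i" using N1[of t] L1 iS by simp
  qed
  have "emb C S js"
    unfolding emb_def
  proof (intro conjI allI impI)
    show "length js = length C" using L1 L2 C by (simp add: js_def)
    show "sorted_wrt (<) js"
      unfolding js_def sorted_wrt_append using S1 S2 lt1
      by (auto simp: sorted_wrt_map) (meson less_SucI less_add_same_cancel1 less_trans_Suc trans_less_add1)
    fix t assume t: "t < length C"
    have disj: "t < length C1 \<or> t = length C1 \<or> (t = Suc (length C1) + (t - Suc (length C1)) \<and> t - Suc (length C1) < length C2)"
      using t C by auto
    consider (a) "t < length C1" | (b) "t = length C1" | (c) u where "t = Suc (length C1) + u" "u < length C2"
      using disj by blast
    then have "js!t < length S \<and> S!(js!t) = C!t"
    proof cases
      case a
      have j: "js!t = js1!t" using a L1 by (simp add: js_def nth_append)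
      have c: "C!t = C1!t" using a C by (simp add: nth_append)
      have "js1!t < i" using N1[OF a] iS by simp
      then show ?thesis using j c N1[OF a] iS by simp
    next
      case b
      have j: "js!t = i" using b L1 by (simp add: js_def nth_append)
      have c: "C!t = S!i" using b C by (simp add: nth_append)
      show ?thesis using j c iS by simp
    next
      case c
      have j: "js!t = Suc i + js2!u" using c L1 L2 by (simp add: js_def nth_append)
      have cc: "C!t = C2!u" using c C by (simp add: nth_append)
      have "drop (Suc i) S ! (js2!u) = S!(Suc i + js2!u)" by (rule nth_drop) (use iS in simp)
      then show ?thesis using j cc N2[OF c(2)] by auto
    qed
    then show "js!t < length S" "S!(js!t) = C!t" by auto
  qed
  moreover have "i \<in> set js" by (simp add: js_def)
  ultimately show ?thesis by blast
qed

lemma scover_char: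
  "scover C S \<longleftrightarrow> (\<forall>i<length S. \<exists>C1 C2. C = C1 @ S!i # C2 \<and> subseq C1 (take i S) \<and> subseq C2 (drop (Suc i) S))"
  unfolding scover_emb
  using cov_to_split split_to_cov by metis



lemma subseq_remdups: "subseq (remdups xs) xs"
  by (induction xs) auto

lemma remdups_append_sub: "set xs \<subseteq> set ys \<Longrightarrow> remdups (xs @ ys) = remdups ys"
  by (induction xs) auto

lemma subseq_rev: "subseq xs ys \<Longrightarrow> subseq (rev xs) (rev ys)"
proof (induction rule: list_emb.induct)
  case (list_emb_Nil ys)
  then show ?case by simp
next
  case (list_emb_Cons xs ys y)
  then show ?case by (simp add: subseq_rev_drop_many)
next
  case (list_emb_Cons2 x y xs ys)
  then show ?case using list_emb_append_mono[of "(=)" "rev xs" "rev ys" "[x]" "[y]"] by simp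
qed


lemma RP: "i < length S \<Longrightarrow> \<exists>R1 R2. remdups S = R1 @ S!i # R2 \<and> subseq R2 (drop (Suc i) S)"
proof (induction S arbitrary: i)
  case Nil
  then show ?case by simp
next
  case (Cons x xs)
  show ?case
  proof (cases i)
    case 0
    show ?thesis
    proof (cases "x \<in> set xs")
      case True
      then have "x \<in> set (remdups xs)" by simp
      then obtain R1 R2 where R: "remdups xs = R1 @ x # R2" by (metis split_list)
      have "subseq R2 ((R1 @ [x]) @ R2)" by (intro subseq_drop_many subseq_order.refl)
      then have "subseq R2 (remdups xs)" using R by simp
      then have "subseq R2 xs" using subseq_remdups subseq_order.trans by blast
      moreover have "remdups (x#xs) = R1 @ (x#xs)!i # R2" using R True 0 by simp
      ultimately show ?thesis using 0 by auto
    next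
      case False
      then have "remdups (x#xs) = [] @ (x#xs)!i # remdups xs" using 0 by simp
      moreover have "subseq (remdups xs) (drop (Suc i) (x#xs))" using 0 subseq_remdups by simp
      ultimately show ?thesis by blast
    qed
  next
    case (Suc i')
    then have "i' < length xs" using Cons.prems by simp
    then obtain R1 R2 where R: "remdups xs = R1 @ xs!i' # R2" "subseq R2 (drop (Suc i') xs)"
      using Cons.IH by blast
    show ?thesis
    proof (cases "x \<in> set xs")
      case True
      then have "remdups (x#xs) = R1 @ (x#xs)!i # R2" using R Suc by simp
      moreover have "subseq R2 (drop (Suc i) (x#xs))" using R Suc by simp
      ultimately show ?thesis by blast
    next
      case False
      then have "remdups (x#xs) = (x#R1) @ (x#xs)!i # R2" using R Suc by simp
      moreover have "subseq R2 (drop (Suc i) (x#xs))" using R Suc by simp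
      ultimately show ?thesis by blast
    qed
  qed
qed


lemma SP: "i < length S \<Longrightarrow> \<exists>Q1 Q2. rev (remdups (rev S)) = Q1 @ S!i # Q2 \<and> subseq Q1 (take i S)"
proof -
  assume i: "i < length S"
  let ?j = "length S - Suc i"
  have j: "?j < length (rev S)" using i by simp
  have rj: "rev S ! ?j = S!i" using i by (simp add: rev_nth)
  obtain R1 R2 where R: "remdups (rev S) = R1 @ rev S ! ?j # R2" "subseq R2 (drop (Suc ?j) (rev S))"
    using RP[OF j] by blast
  have "drop (Suc ?j) (rev S) = rev (take i S)" using i by (simp add: drop_rev)
  then have "subseq (rev R2) (take i S)" using subseq_rev[OF R(2)] by simp
  moreover have "rev (remdups (rev S)) = rev R2 @ S!i # rev R1" using R(1) rj by simp
  ultimately show ?thesis by blast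
qed



lemma rho_sub: "set S \<subseteq> set (drop z S) \<Longrightarrow> subseq (remdups S) (drop z S)"
proof -
  assume a: "set S \<subseteq> set (drop z S)"
  have st: "set (take z S) \<subseteq> set (drop z S)" using a set_take_subset by (rule order_trans[rotated])
  have "remdups S = remdups (take z S @ drop z S)" by simp
  also have "\<dots> = remdups (drop z S)"
    by (rule remdups_append_sub[OF st])
  finally show ?thesis using subseq_remdups[of "drop z S"] by simp
qed

lemma sig_sub: "set S \<subseteq> set (take z S) \<Longrightarrow> subseq (rev (remdups (rev S))) (take z S)"
proof -
  assume a: "set S \<subseteq> set (take z S)"
  have st: "set (rev (drop z S)) \<subseteq> set (rev (take z S))"
    using a set_drop_subset[of z S] by simp
  have "rev S = rev (drop z S) @ rev (take z S)" by (metis append_take_drop_id rev_append)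
  then have "remdups (rev S) = remdups (rev (drop z S) @ rev (take z S))" by simp
  also have "\<dots> = remdups (rev (take z S))"
    by (rule remdups_append_sub[OF st])
  finally have "subseq (remdups (rev S)) (rev (take z S))" using subseq_remdups[of "rev (take z S)"] by simp
  from subseq_rev[OF this] show ?thesis by simp
qed



lemma scover_subseq:
  assumes c: "scover C u" and ne: "u \<noteq> []"
  shows "subseq C u"
proof -
  have "0 < length u" using ne by simp
  then obtain C1 C2 where C: "C = C1 @ u!0 # C2" and s1: "subseq C1 (take 0 u)"
    and s2: "subseq C2 (drop (Suc 0) u)"
    using c unfolding scover_char by blast
  have "C1 = []" using s1 by simp
  then have "C = u!0 # C2" using C by simp
  moreover have "subseq (u!0 # C2) (u!0 # drop (Suc 0) u)" using s2 by simp
  moreover have "u!0 # drop (Suc 0) u = u" using ne by (simp add: Cons_nth_drop_Suc)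
  ultimately show ?thesis by simp
qed

lemma factor_cover:
  assumes c: "scover C u" and ne: "u \<noteq> []"
  shows "scover (x @ C @ y) (x @ u @ y)"
  unfolding scover_char
proof (intro allI impI)
  fix i assume i: "i < length (x @ u @ y)"
  have Cu: "subseq C u" using scover_subseq[OF c ne] .
  consider (a) "i < length x" | (b) "length x \<le> i" "i < length x + length u"
    | (c) "length x + length u \<le> i" by linarith
  then show "\<exists>C1 C2. x @ C @ y = C1 @ (x @ u @ y) ! i # C2 \<and>
          subseq C1 (take i (x @ u @ y)) \<and> subseq C2 (drop (Suc i) (x @ u @ y))"
  proof cases
    case a
    have e1: "x @ C @ y = take i x @ (x @ u @ y) ! i # (drop (Suc i) x @ C @ y)"
      using a id_take_nth_drop[OF a] by (simp add: nth_append)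
    have t: "take i (x @ u @ y) = take i x" using a by simp
    have d: "drop (Suc i) (x @ u @ y) = drop (Suc i) x @ u @ y" using a by simp
    have "subseq (C @ y) (u @ y)" using list_emb_append_mono[OF Cu, of y y] by simp
    then have "subseq (drop (Suc i) x @ C @ y) (drop (Suc i) (x @ u @ y))"
      using d by (simp add: subseq_append')
    moreover have "subseq (take i x) (take i (x @ u @ y))" unfolding t by simp
    ultimately show ?thesis using e1 by blast
  next
    case b
    define i' where "i' = i - length x"
    have i': "i' < length u" using b by (simp add: i'_def)
    obtain C1 C2 where C: "C = C1 @ u!i' # C2" and s1: "subseq C1 (take i' u)"
      and s2: "subseq C2 (drop (Suc i') u)"
      using c i' unfolding scover_char by blast
    have n: "(x @ u @ y) ! i = u ! i'" using b i' by (simp add: nth_append i'_def)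
    have t: "take i (x @ u @ y) = x @ take i' u" using b by (simp add: i'_def)
    have d: "drop (Suc i) (x @ u @ y) = drop (Suc i') u @ y" using b
      by (simp add: i'_def Suc_diff_le)
    have "x @ C @ y = (x @ C1) @ (x @ u @ y) ! i # (C2 @ y)" using C n by simp
    moreover have "subseq (x @ C1) (take i (x @ u @ y))" using t s1 by (simp add: subseq_append')
    moreover have "subseq (C2 @ y) (drop (Suc i) (x @ u @ y))"
      using d list_emb_append_mono[OF s2, of y y] by simp
    ultimately show ?thesis by blast
  next
    case c
    define i' where "i' = i - length x - length u"
    have i': "i' < length y" using c i by (simp add: i'_def)
    have n: "(x @ u @ y) ! i = y ! i'" using c by (auto simp: nth_append i'_def)
    have t: "take i (x @ u @ y) = x @ u @ take i' y" using c by (simp add: i'_def)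
    have d: "drop (Suc i) (x @ u @ y) = drop (Suc i') y" using c
      by (simp add: i'_def Suc_diff_le)
    have "x @ C @ y = (x @ C @ take i' y) @ (x @ u @ y) ! i # drop (Suc i') y"
      using n id_take_nth_drop[OF i'] by simp
    moreover have "subseq (x @ C @ take i' y) (take i (x @ u @ y))"
      using t list_emb_append_mono[OF Cu, of "take i' y" "take i' y"] by (simp add: subseq_append')
    moreover have "subseq (drop (Suc i') y) (drop (Suc i) (x @ u @ y))" using d by simp
    ultimately show ?thesis by blast
  qed
qed

lemma prim_factor:
  assumes "s_primitive (x @ u @ y)" shows "s_primitive u"
  unfolding s_primitive_def
proof
  assume "\<exists>C. scover C u \<and> length C < length u"
  then obtain C where c: "scover C u" and l: "length C < length u" by blast
  then have "u \<noteq> []" by auto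
  then have "scover (x @ C @ y) (x @ u @ y)" using factor_cover c by blast
  moreover have "length (x @ C @ y) < length (x @ u @ y)" using l by simp
  ultimately show False using assms unfolding s_primitive_def by blast
qed



definition sw :: "nat \<Rightarrow> nat \<Rightarrow> nat \<Rightarrow> nat" where
  "sw c m x = (if x = c then m else if x = m then c else x)"

lemma sw_sw [simp]: "sw c m (sw c m x) = x"
  unfolding sw_def by auto

lemma scover_map_sw:
  assumes "scover D (map (sw c m) u)"
  shows "scover (map (sw c m) D) u"
  unfolding scover_def
proof (intro allI impI)
  fix i assume i: "i < length u"
  then obtain js where L: "length js = length D" and S: "sorted_wrt (<) js"
    and N: "\<forall>t<length D. js!t < length (map (sw c m) u) \<and> (map (sw c m) u)!(js!t) = D!t"
    and I: "i \<in> set js"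
    using assms unfolding scover_def by (metis length_map)
  have "\<forall>t<length (map (sw c m) D). js!t < length u \<and> u!(js!t) = (map (sw c m) D)!t"
  proof (intro allI impI)
    fix t assume t: "t < length (map (sw c m) D)"
    then have t': "t < length D" by simp
    have a: "js!t < length u" using N t' by simp
    have "(map (sw c m) u)!(js!t) = D!t" using N t' by blast
    then have "sw c m (u!(js!t)) = D!t" using a by simp
    then have "u!(js!t) = sw c m (D!t)" by (metis sw_sw)
    then show "js!t < length u \<and> u!(js!t) = (map (sw c m) D)!t" using a t' by simp
  qed
  then show "\<exists>js. length js = length (map (sw c m) D) \<and> sorted_wrt (<) js \<and>
          (\<forall>t<length (map (sw c m) D). js ! t < length u \<and> u ! (js ! t) = map (sw c m) D ! t) \<and>
          i \<in> set js"
    using L S I by auto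
qed

lemma prim_rename:
  assumes "s_primitive u" shows "s_primitive (map (sw c m) u)"
  unfolding s_primitive_def
proof
  assume "\<exists>C. scover C (map (sw c m) u) \<and> length C < length (map (sw c m) u)"
  then obtain D where "scover D (map (sw c m) u)" "length D < length (map (sw c m) u)" by blast
  then have "scover (map (sw c m) D) u" "length (map (sw c m) D) < length u"
    using scover_map_sw by auto
  then show False using assms unfolding s_primitive_def by blast
qed

lemma len_le_gamma:
  assumes p: "s_primitive u" and s: "set u \<subseteq> {..<k}" and c: "c < k" "c \<notin> set u"
  shows "enat (length u) \<le> gamma (k - 1)"
proof -
  let ?v = "map (sw c (k - 1)) u"
  have "set ?v \<subseteq> {..<k - 1}"
  proof
    fix y assume "y \<in> set ?v"
    then obtain x where x: "x \<in> set u" "y = sw c (k - 1) x" by auto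
    have xk: "x < k" "x \<noteq> c" using x s c by auto
    show "y \<in> {..<k - 1}"
    proof (cases "x = k - 1")
      case True
      then have "c \<noteq> k - 1" using xk by simp
      then have "c < k - 1" using c by simp
      then show ?thesis using x True xk by (simp add: sw_def)
    next
      case False
      then show ?thesis using x xk by (simp add: sw_def)
    qed
  qed
  moreover have "s_primitive ?v" using prim_rename[OF p] .
  ultimately have "?v \<in> {S :: nat list. set S \<subseteq> {..<k - 1} \<and> s_primitive S}" by simp
  then have "enat (length ?v) \<le> gamma (k - 1)" unfolding gamma_def by (rule SUP_upper)
  then show ?thesis by simp
qed

definition full :: "nat \<Rightarrow> nat \<Rightarrow> nat list \<Rightarrow> bool" where
  "full k b w \<longleftrightarrow> (\<forall>j. j + b \<le> length w \<longrightarrow> {..<k} \<subseteq> set (take b (drop j w)))"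

lemma full_drop: "full k b w \<Longrightarrow> full k b (drop z w)"
  unfolding full_def
proof (intro allI impI)
  fix j assume f: "\<forall>j. j + b \<le> length w \<longrightarrow> {..<k} \<subseteq> set (take b (drop j w))"
    and j: "j + b \<le> length (drop z w)"
  show "{..<k} \<subseteq> set (take b (drop j (drop z w)))"
  proof (cases "z \<le> length w")
    case True
    have jz: "(j + z) + b \<le> length w" using j True by simp
    have "{..<k} \<subseteq> set (take b (drop (j + z) w))" using f jz by blast
    then show ?thesis by (simp add: add.commute)
  next
    case False
    then have "j = 0" "b = 0" using j by auto
    moreover have "{..<k} \<subseteq> set (take b (drop 0 w))" using f \<open>b = 0\<close> by (metis add_0 zero_le)
    ultimately show ?thesis by simp
  qed
qed

lemma full_take: "full k b w \<Longrightarrow> full k b (take z w)"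
  unfolding full_def
proof (intro allI impI)
  fix j assume f: "\<forall>j. j + b \<le> length w \<longrightarrow> {..<k} \<subseteq> set (take b (drop j w))"
    and j: "j + b \<le> length (take z w)"
  then have "{..<k} \<subseteq> set (take b (drop j w))" by simp
  moreover have "take b (drop j (take z w)) = take b (drop j w)"
  proof -
    have "b \<le> z - j" using j by (simp; linarith)
    then show ?thesis by (simp add: drop_take min_absorb1)
  qed
  ultimately show "{..<k} \<subseteq> set (take b (drop j (take z w)))" by simp
qed

lemma univ:
  "full k b w \<Longrightarrow> set x \<subseteq> {..<k} \<Longrightarrow> length x * b \<le> length w \<Longrightarrow> subseq x w"
proof (induction x arbitrary: w)
  case Nil
  then show ?case by simp
next
  case (Cons a x)
  have bw: "b \<le> length w" using Cons.prems(3) by simp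
  have b0: "0 + b \<le> length w" using bw by simp
  have "{..<k} \<subseteq> set (take b (drop 0 w))" using Cons.prems(1) b0 unfolding full_def by blast
  then have "a \<in> set (take b w)" using Cons.prems(2) by auto
  then have s1: "subseq [a] (take b w)" by (simp add: subseq_singleton_left)
  have "subseq x (drop b w)"
    using Cons.IH[OF full_drop[OF Cons.prems(1)]] Cons.prems(2,3) by simp
  from list_emb_append_mono[OF s1 this] show ?case by simp
qed



lemma card_le_k: "set S \<subseteq> {..<k} \<Longrightarrow> card (set S) \<le> k"
  using card_mono[of "{..<k}" "set S"] by simp

lemma main_cover:
  assumes sk: "set S \<subseteq> {..<(k::nat)}" and b: "b \<ge> 1" and f: "full k b S"
    and n: "2 * (k * b) \<le> length S" and k1: "k \<ge> 1"
  shows "scover (rev (remdups (rev S)) @ remdups S) S"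
  unfolding scover_char
proof (intro allI impI)
  fix i assume i: "i < length S"
  let ?Sig = "rev (remdups (rev S))" and ?Rho = "remdups S"
  have lRho: "length ?Rho \<le> k" using card_le_k[OF sk] by (simp add: length_remdups_card_conv)
  have lSig: "length ?Sig \<le> k" using card_le_k[OF sk] by (simp add: length_remdups_card_conv)
  have setRho: "set ?Rho \<subseteq> {..<k}" using sk by simp
  have setSig: "set ?Sig \<subseteq> {..<k}" using sk by simp
  have kb: "(k - 1) * b + b = k * b" using k1 by (cases k) auto
  have bk: "b \<le> k * b" using kb by linarith
  show "\<exists>C1 C2. ?Sig @ ?Rho = C1 @ S ! i # C2 \<and> subseq C1 (take i S) \<and> subseq C2 (drop (Suc i) S)"
  proof (cases "k * b \<le> i")
    case True
    obtain R1 R2 where R: "?Rho = R1 @ S!i # R2" "subseq R2 (drop (Suc i) S)"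
      using RP[OF i] by blast
    have lR1: "length R1 \<le> k - 1" using R(1) lRho by simp
    have sR1: "set R1 \<subseteq> {..<k}" using R(1) setRho by auto
    have "0 + b \<le> length S" using True i bk by linarith
    then have "{..<k} \<subseteq> set (take b (drop 0 S))" using f unfolding full_def by blast
    then have "set S \<subseteq> set (take b S)" using sk by auto
    then have s0: "subseq ?Sig (take b S)" by (rule sig_sub)
    have tb: "take b S = take b (take i S)"
    proof -
      have "b \<le> i" using True bk by linarith
      then show ?thesis by (simp add: min_absorb1)
    qed
    have s1: "subseq ?Sig (take b (take i S))" using s0 tb by simp
    have m1: "length R1 * b \<le> (k - 1) * b" using lR1 by (rule mult_le_mono1)
    have ld: "length (drop b (take i S)) = i - b" using i by simp
    have "length R1 * b \<le> length (drop b (take i S))" unfolding ld using m1 True kb by linarith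
    then have s2: "subseq R1 (drop b (take i S))"
      using univ[OF full_drop[OF full_take[OF f]] sR1] by blast
    have "subseq (?Sig @ R1) (take b (take i S) @ drop b (take i S))"
      by (rule list_emb_append_mono[OF s1 s2])
    then have "subseq (?Sig @ R1) (take i S)" by (simp only: append_take_drop_id)
    moreover have "?Sig @ ?Rho = (?Sig @ R1) @ S!i # R2" using R(1) by simp
    ultimately show ?thesis using R(2) by blast
  next
    case False
    obtain Q1 Q2 where Q: "?Sig = Q1 @ S!i # Q2" "subseq Q1 (take i S)"
      using SP[OF i] by blast
    have lQ2: "length Q2 \<le> k - 1" using Q(1) lSig by simp
    have sQ2: "set Q2 \<subseteq> {..<k}" using Q(1) setSig by auto
    define D where "D = drop (Suc i) S"
    define m where "m = (k - 1) * b"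
    have lD: "length D = length S - Suc i" by (simp add: D_def)
    have mD: "m \<le> length D" using lD False n kb unfolding m_def by linarith
    have "length Q2 * b \<le> m" unfolding m_def using lQ2 by (rule mult_le_mono1)
    then have "length Q2 * b \<le> length (take m D)" using mD by simp
    have fD: "full k b (take m D)" unfolding D_def by (rule full_take[OF full_drop[OF f]])
    then have s1: "subseq Q2 (take m D)"
      using univ[OF fD sQ2] \<open>length Q2 * b \<le> length (take m D)\<close> by blast
    define z where "z = m + Suc i"
    have dz: "drop m D = drop z S" by (simp add: D_def z_def)
    have "z + b \<le> length S" using False n kb unfolding z_def m_def by linarith
    then have "{..<k} \<subseteq> set (take b (drop z S))" using f unfolding full_def by blast
    then have "set S \<subseteq> set (drop z S)" using sk set_take_subset[of b "drop z S"] by (meson order_trans)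
    then have s2: "subseq ?Rho (drop m D)" unfolding dz by (rule rho_sub)
    have "subseq (Q2 @ ?Rho) (take m D @ drop m D)" by (rule list_emb_append_mono[OF s1 s2])
    then have "subseq (Q2 @ ?Rho) D" by (simp only: append_take_drop_id)
    then have "subseq (Q2 @ ?Rho) (drop (Suc i) S)" by (simp only: D_def)
    moreover have "?Sig @ ?Rho = Q1 @ S!i # (Q2 @ ?Rho)" using Q(1) by simp
    ultimately show ?thesis using Q(2) by blast
  qed
qed



theorem mainTheorem6:
  fixes k :: nat
  assumes "k > 1"
  shows "gamma k \<le> enat (2 * k + 2) * (gamma (k - 1) + 1) - 1"
proof (cases "gamma (k - 1)")
  case infinity
  then show ?thesis by simp
next
  case (enat G)
  define N where "N = (2 * k + 2) * (G + 1) - 1"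
  have rhs: "enat (2 * k + 2) * (gamma (k - 1) + 1) - 1 = enat N"
    using enat by (simp add: one_enat_def N_def)
  have "gamma k \<le> enat N"
    unfolding gamma_def
  proof (rule SUP_least)
    fix S :: "nat list" assume "S \<in> {S. set S \<subseteq> {..<k} \<and> s_primitive S}"
    then have sk: "set S \<subseteq> {..<k}" and pS: "s_primitive S" by auto
    define b where "b = G + 1"
    show "enat (length S) \<le> enat N"
    proof (rule ccontr)
      assume "\<not> enat (length S) \<le> enat N"
      then have big: "(2 * k + 2) * b \<le> length S" unfolding N_def b_def by simp
      have f: "full k b S"
        unfolding full_def
      proof (intro allI impI)
        fix j assume j: "j + b \<le> length S"
        define u where "u = take b (drop j S)"
        show "{..<k} \<subseteq> set u"
        proof (rule ccontr)
          assume "\<not> {..<k} \<subseteq> set u"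
          then obtain c where c: "c < k" "c \<notin> set u" by auto
          have "S = take j S @ u @ drop b (drop j S)" unfolding u_def
            by (simp only: append_take_drop_id)
          then have pu: "s_primitive u" using pS prim_factor by metis
          have "set u \<subseteq> set S" unfolding u_def
            using set_take_subset set_drop_subset by (meson order_trans)
          then have su: "set u \<subseteq> {..<k}" using sk by blast
          have "enat (length u) \<le> gamma (k - 1)" by (rule len_le_gamma[OF pu su c])
          then have "length u \<le> G" using enat by simp
          moreover have "length u = b" unfolding u_def using j by simp
          ultimately show False unfolding b_def by simp
        qed
      qed
      have b1: "b \<ge> 1" unfolding b_def by simp
      have ar: "(2 * k + 2) * b = 2 * (k * b) + 2 * b" by (simp add: algebra_simps)
      have n: "2 * (k * b) \<le> length S" using big ar by linarith
      have k1: "k \<ge> 1" using assms by simp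
      have cov: "scover (rev (remdups (rev S)) @ remdups S) S"
        by (rule main_cover[OF sk b1 f n k1])
      have "length (rev (remdups (rev S)) @ remdups S) \<le> 2 * k"
        using card_le_k[OF sk] by (simp add: length_remdups_card_conv)
      moreover have "2 * k < length S"
      proof -
        have "(2 * k + 2) * 1 \<le> (2 * k + 2) * b" using b1 by (rule mult_le_mono2)
        then have "2 * k + 2 \<le> (2 * k + 2) * b" by (simp only: mult_1_right)
        then show ?thesis using big by linarith
      qed
      ultimately show False using cov pS unfolding s_primitive_def by fastforce
    qed
  qed
  then show ?thesis using rhs by simp
qed


end
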